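(* Assume $\mathrm{recc}(C)\subseteq\mathrm{recc}(P^B)$ and fix $k\in N_2$. Then $k\notin J$, i.e., $\bar r^k\notin\mathrm{recc}(S_k^C)$.
   Context: Let $A\in\mathbb{R}^{m\times n}$ have full row rank, $b\in\mathbb{R}^m$, and $P=\{x\in\mathbb{R}^n_+:Ax=b\}$. Let $C\subseteq\mathbb{R}^n$ be an open convex set. Fix a basis $B$ of $P$ with nonbasic set $N=\{1,\dots,n\}\setminus B$. Write $P=\{x:x_i=\bar b_i-\sum_{j\in N}\bar a_{ij}x_j\ (i\in B),\ x\ge0\}$ with $\bar b\ge0$. The basic solution $\bar x$ has $\bar x_i=\bar b_i$ ($i\in B$) and $0$ ($i\in N$). $P^B$ is obtained by dropping $x_i\ge0$ for $i\in B$. For $j\in N$, $\bar r^j$ has $\bar r^j_k=-\bar a_{kj}$ ($k\in B$), $\bar r^j_j=1$, and $0$ otherwise. Thus $P^B=\{\bar x+\sum_{j\in N}x_j\bar r^j:x_j\ge0\}$. It is assumed that $\bar x\notin\mathrm{cl}(C)$. For $j\in N$, $\alpha_j=\inf\{\lambda\ge0:\bar x+\lambda\bar r^j\in C\}$ and $\beta_j=\sup\{\lambda\ge0:\bar x+\lambda\bar r^j\in C\}$, with $\alpha_j=+\infty$, $\beta_j=-\infty$ if the halfline misses $C$. Let $N_2=\{j:\alpha_j\in(0,\infty),\beta_j\in(\alpha_j,\infty)\}$. For a set $K$, $\mathrm{recc}(K)=\{d:x+\lambda d\in K\ \forall x\in K,\lambda\ge0\}$. For $k\in N_2$, $S_k^C=\{\bar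 x\}+\mathrm{conv}\big(\bigcup_{j\in N_2}\{\lambda\bar r^j:0\le\lambda<\beta_j\}\big)+\{\lambda\bar r^k:\lambda\le0\}+\mathrm{recc}(C)$, and $J=\{i\in N:\bar r^i\in\mathrm{recc}(S_k^C)\}$. *)

theory Defs
  imports "HOL-Analysis.Analysis"
begin

text \<open>B :: 'n set is the basis, N = UNIV - B.
  The simplex tableau is given by abar :: 'n => 'n => real (entries abar i j, i in B, j in N)
  and bbar :: 'n => real.\<close>

definition polyP :: "real^'n^'m \<Rightarrow> real^'m \<Rightarrow> (real^'n) set" where
  "polyP A b = {x. (\<forall>i. 0 \<le> x $ i) \<and> A *v x = b}"

definition is_basis_of :: "real^'n^'m \<Rightarrow> real^'m \<Rightarrow> 'n set \<Rightarrow> bool" where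
  "is_basis_of A b B \<longleftrightarrow> card B = CARD('m) \<and>
     card ((\<lambda>j. column j A) ` B) = CARD('m) \<and> independent ((\<lambda>j. column j A) ` B)"

definition is_tableau :: "real^'n^'m \<Rightarrow> real^'m \<Rightarrow> 'n set \<Rightarrow> ('n \<Rightarrow> 'n \<Rightarrow> real) \<Rightarrow> ('n \<Rightarrow> real) \<Rightarrow> bool" where
  "is_tableau A b B abar bbar \<longleftrightarrow>
     (\<forall>x. A *v x = b \<longleftrightarrow> (\<forall>i\<in>B. x $ i = bbar i - (\<Sum>j\<in>UNIV - B. abar i j * x $ j)))"

definition xbar :: "'n set \<Rightarrow> ('n \<Rightarrow> real) \<Rightarrow> real^'n" where
  "xbar B bbar = (\<chi> i. if i \<in> B then bbar i else 0)"

definition rbar :: "'n set \<Rightarrow> ('n \<Rightarrow> 'n \<Rightarrow> real) \<Rightarrow> 'n \<Rightarrow> real^'n" where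
  "rbar B abar j = (\<chi> k. if k \<in> B then - abar k j else if k = j then 1 else 0)"

text \<open>P^B: drop the nonnegativity constraints of the basic variables.\<close>
definition PB :: "'n set \<Rightarrow> ('n \<Rightarrow> 'n \<Rightarrow> real) \<Rightarrow> ('n \<Rightarrow> real) \<Rightarrow> (real^'n) set" where
  "PB B abar bbar = {x. (\<forall>i\<in>B. x $ i = bbar i - (\<Sum>j\<in>UNIV - B. abar i j * x $ j))
                        \<and> (\<forall>j\<in>UNIV - B. 0 \<le> x $ j)}"

definition recc :: "(real^'n) set \<Rightarrow> (real^'n) set" where
  "recc K = {d. \<forall>x\<in>K. \<forall>t::real. t \<ge> 0 \<longrightarrow> x + t *\<^sub>R d \<in> K}"

text \<open>alpha_j, beta_j as extended reals: Inf {} = +infinity, Sup {} = -infinity.\<close>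
definition alpha :: "(real^'n) set \<Rightarrow> 'n set \<Rightarrow> ('n \<Rightarrow> 'n \<Rightarrow> real) \<Rightarrow> ('n \<Rightarrow> real) \<Rightarrow> 'n \<Rightarrow> ereal" where
  "alpha C B abar bbar j =
     Inf (ereal ` {t. 0 \<le> t \<and> xbar B bbar + t *\<^sub>R rbar B abar j \<in> C})"

definition beta :: "(real^'n) set \<Rightarrow> 'n set \<Rightarrow> ('n \<Rightarrow> 'n \<Rightarrow> real) \<Rightarrow> ('n \<Rightarrow> real) \<Rightarrow> 'n \<Rightarrow> ereal" where
  "beta C B abar bbar j =
     Sup (ereal ` {t. 0 \<le> t \<and> xbar B bbar + t *\<^sub>R rbar B abar j \<in> C})"

definition N2 :: "(real^'n) set \<Rightarrow> 'n set \<Rightarrow> ('n \<Rightarrow> 'n \<Rightarrow> real) \<Rightarrow> ('n \<Rightarrow> real) \<Rightarrow> 'n set" where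
  "N2 C B abar bbar = {j \<in> UNIV - B.
     0 < alpha C B abar bbar j \<and> alpha C B abar bbar j < \<infinity> \<and>
     alpha C B abar bbar j < beta C B abar bbar j \<and> beta C B abar bbar j < \<infinity>}"

definition SkC :: "(real^'n) set \<Rightarrow> 'n set \<Rightarrow> ('n \<Rightarrow> 'n \<Rightarrow> real) \<Rightarrow> ('n \<Rightarrow> real) \<Rightarrow> 'n \<Rightarrow> (real^'n) set" where
  "SkC C B abar bbar k =
     {xbar B bbar + y + \<mu> *\<^sub>R rbar B abar k + d | y \<mu> d.
        y \<in> convex hull (\<Union>j\<in>N2 C B abar bbar.
               {t *\<^sub>R rbar B abar j | t. 0 \<le> t \<and> ereal t < beta C B abar bbar j})
        \<and> \<mu> \<le> 0 \<and> d \<in> recc C}"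

definition Jset :: "(real^'n) set \<Rightarrow> 'n set \<Rightarrow> ('n \<Rightarrow> 'n \<Rightarrow> real) \<Rightarrow> ('n \<Rightarrow> real) \<Rightarrow> 'n \<Rightarrow> 'n set" where
  "Jset C B abar bbar k = {i \<in> UNIV - B. rbar B abar i \<in> recc (SkC C B abar bbar k)}"

end

theory Submission
  imports Defs
begin

lemma convex_comp_le: "convex {z::real^'n. z $ k \<le> c}"
  using convex_halfspace_le[of "axis k (1::real)" c] by (simp add: cart_eq_inner_axis inner_commute)

lemma convex_comp_ge: "convex {z::real^'n. z $ k \<ge> c}"
  using convex_halfspace_ge[of c "axis k (1::real)"] by (simp add: cart_eq_inner_axis inner_commute)

lemma reccD: "d \<in> recc K \<Longrightarrow> x \<in> K \<Longrightarrow> 0 \<le> t \<Longrightarrow> x + t *\<^sub>R d \<in> K"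
  unfolding recc_def by blast

theorem proposition6:
  fixes A :: "real^'n^'m" and b :: "real^'m" and C :: "(real^'n) set"
    and B :: "'n set" and abar :: "'n \<Rightarrow> 'n \<Rightarrow> real" and bbar :: "'n \<Rightarrow> real" and k :: 'n
  assumes "rank A = CARD('m)"
    and "is_basis_of A b B"
    and "is_tableau A b B abar bbar"
    and bpos: "\<forall>i\<in>B. 0 \<le> bbar i"
    and "open C" and "convex C"
    and "xbar B bbar \<notin> closure C"
    and rec: "recc C \<subseteq> recc (PB B abar bbar)"
    and kN2: "k \<in> N2 C B abar bbar"
  shows "k \<notin> Jset C B abar bbar k \<and> rbar B abar k \<notin> recc (SkC C B abar bbar k)"
proof -
  let ?x = "xbar B bbar"
  let ?r = "rbar B abar"
  let ?S = "SkC C B abar bbar k"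
  let ?U = "\<Union>j\<in>N2 C B abar bbar. {t *\<^sub>R ?r j | t. 0 \<le> t \<and> ereal t < beta C B abar bbar j}"
  have kB: "k \<notin> B" using kN2 by (simp add: N2_def)
  have a0: "0 < alpha C B abar bbar k" and ainf: "alpha C B abar bbar k < \<infinity>"
    and ab: "alpha C B abar bbar k < beta C B abar bbar k" and binf: "beta C B abar bbar k < \<infinity>"
    using kN2 by (auto simp: N2_def)
  define bk where "bk = real_of_ereal (beta C B abar bbar k)"
  have bpos0: "0 < beta C B abar bbar k" using a0 ab by simp
  have bk_eq: "beta C B abar bbar k = ereal bk"
    using bpos0 binf unfolding bk_def by (cases "beta C B abar bbar k") auto
  have bk0: "0 < bk" using bpos0 bk_eq by simp
  have main: "?r k \<notin> recc ?S"
  proof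
    assume rS: "?r k \<in> recc ?S"
    have "0 \<in> ?U" using kN2 bpos0 by (auto simp flip: zero_ereal_def intro!: bexI[of _ k] exI[of _ 0])
    hence "0 \<in> convex hull ?U" by (meson hull_inc)
    moreover have "0 \<in> recc C" by (simp add: recc_def)
    ultimately have xS: "?x \<in> ?S" unfolding SkC_def
      by (auto intro!: exI[of _ 0] exI[of _ "0::real"])
    have "?x + (bk + 1) *\<^sub>R ?r k \<in> ?S" using reccD[OF rS xS, of "bk + 1"] bk0 by simp
    then obtain y \<mu> d where eq: "?x + (bk + 1) *\<^sub>R ?r k = ?x + y + \<mu> *\<^sub>R ?r k + d"
      and yU: "y \<in> convex hull ?U" and mu: "\<mu> \<le> 0" and dC: "d \<in> recc C"
      unfolding SkC_def by blast
    have Usub1: "?U \<subseteq> {z. z $ k \<le> bk}"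
    proof
      fix z assume "z \<in> ?U"
      then obtain j t where "j \<in> N2 C B abar bbar" "0 \<le> t" "ereal t < beta C B abar bbar j"
        "z = t *\<^sub>R ?r j" by blast
      thus "z \<in> {z. z $ k \<le> bk}" using kB bk0 bk_eq by (auto simp: rbar_def)
    qed
    have yk: "y $ k \<le> bk"
      using hull_minimal[where S=convex, OF Usub1 convex_comp_le[of k bk]] yU by blast
    have ynn: "0 \<le> y $ j" if "j \<notin> B" for j
    proof -
      have "?U \<subseteq> {z. z $ j \<ge> 0}"
      proof
        fix z assume "z \<in> ?U"
        then obtain i t where "i \<in> N2 C B abar bbar" "0 \<le> t"
          "z = t *\<^sub>R ?r i" by blast
        thus "z \<in> {z. z $ j \<ge> 0}" using that by (auto simp: rbar_def)
      qed
      thus ?thesis using hull_minimal[where S=convex, OF _ convex_comp_ge[of 0 j]] yU by blast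
    qed
    have xPB: "?x \<in> PB B abar bbar" by (simp add: PB_def xbar_def)
    have dPB: "d \<in> recc (PB B abar bbar)" using dC rec by blast
    hence "?x + 1 *\<^sub>R d \<in> PB B abar bbar" using reccD[OF _ xPB, of d 1] by simp
    hence dN: "\<forall>j\<in>UNIV - B. 0 \<le> d $ j"
      and dB: "\<forall>i\<in>B. bbar i + d $ i = bbar i - (\<Sum>j\<in>UNIV - B. abar i j * d $ j)"
      by (auto simp: PB_def xbar_def)
    have deq: "d = ((bk + 1) - \<mu>) *\<^sub>R ?r k - y" using eq by (simp add: algebra_simps)
    have dj0: "d $ j = 0" if "j \<notin> B" "j \<noteq> k" for j
    proof -
      have "d $ j = - y $ j" using deq that by (simp add: rbar_def)
      moreover have "0 \<le> d $ j" using dN that by blast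
      ultimately show ?thesis using ynn[OF that(1)] by linarith
    qed
    define dk where "dk = d $ k"
    have dk: "dk = (bk + 1) - \<mu> - y $ k" using deq kB by (simp add: rbar_def dk_def)
    have dkpos: "0 < dk" using dk yk mu by simp
    have dform: "d = dk *\<^sub>R ?r k"
    proof (rule vec_eq_iff[THEN iffD2], intro allI)
      fix i
      show "d $ i = (dk *\<^sub>R ?r k) $ i"
      proof (cases "i \<in> B")
        case True
        have "(\<Sum>j\<in>UNIV - B. abar i j * d $ j) = (\<Sum>j\<in>{k}. abar i j * d $ j)"
          by (rule sum.mono_neutral_right) (use kB dj0 in auto)
        thus ?thesis using dB True by (simp add: rbar_def dk_def)
      next
        case False
        thus ?thesis using dj0 by (cases "i = k") (auto simp: rbar_def dk_def)
      qed
    qed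
    have rC: "?r k \<in> recc C"
      unfolding recc_def
    proof (intro CollectI ballI allI impI)
      fix z and s :: real assume "z \<in> C" "0 \<le> s"
      hence "z + (s / dk) *\<^sub>R d \<in> C" using reccD[OF dC, of z "s / dk"] dkpos by simp
      thus "z + s *\<^sub>R ?r k \<in> C" using dform dkpos by simp
    qed
    let ?T = "{t. 0 \<le> t \<and> ?x + t *\<^sub>R ?r k \<in> C}"
    have "?T \<noteq> {}"
    proof
      assume "?T = {}"
      hence "alpha C B abar bbar k = \<infinity>" unfolding alpha_def by (metis image_empty Inf_empty top_ereal_def)
      thus False using ainf by simp
    qed
    then obtain t0 where t0: "0 \<le> t0" "?x + t0 *\<^sub>R ?r k \<in> C" by blast
    have "t0 + (bk + 1) \<in> ?T"
    proof -
      have "?x + t0 *\<^sub>R ?r k + (bk + 1) *\<^sub>R ?r k \<in> C" using reccD[OF rC t0(2), of "bk + 1"] bk0 by simp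
      thus ?thesis using t0 bk0 by (simp add: scaleR_add_left add.assoc)
    qed
    hence "ereal (t0 + (bk + 1)) \<le> beta C B abar bbar k"
      unfolding beta_def by (meson SUP_upper)
    thus False using bk_eq t0 by simp
  qed
  thus ?thesis using kB by (simp add: Jset_def)
qed

end
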